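(* Let $n\in\mathbb{N}$, let $\chi$ be a red-blue colouring of $E(K_n)$, and let $P$ be a blue path in $K_n$. Let $Y=[n]\setminus V(P)$ and let $Y_0$ be the set of vertices $y\in Y$ such that no edge between $y$ and a vertex of $V(P)$ is blue. Then $$f(n,\chi)\leq 1+\left\lceil\frac{|Y\setminus Y_0|}{2}\right\rceil+|Y_0|<2+\frac{|Y|}{2}+\frac{|Y_0|}{2}.$$
   Context: $K_n$ is the complete graph on vertex set $[n]=\{1,\dots,n\}$. For a red-blue colouring $\chi$ of $E(K_n)$, $f(n,\chi)$ is the smallest size of a family of monochromatic paths, all of the same colour, whose union covers $[n]$; here paths may have length zero (a single vertex) and need not be disjoint. A blue path is one all of whose edges are blue. *)

theory Defs
  imports Complex_Main
begin

datatype colour = Red | Blue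

text \<open>A red-blue colouring of E(K_n) on vertex set [n] = {1..n} is a map from
  2-element vertex sets {u,v} to colours; only its values on edges of K_n matter.\<close>

definition mono_path :: "nat \<Rightarrow> (nat set \<Rightarrow> colour) \<Rightarrow> colour \<Rightarrow> nat list \<Rightarrow> bool" where
  "mono_path n \<chi> c p \<longleftrightarrow> p \<noteq> [] \<and> distinct p \<and> set p \<subseteq> {1..n} \<and>
     (\<forall>i. Suc i < length p \<longrightarrow> \<chi> {p ! i, p ! Suc i} = c)"

definition f :: "nat \<Rightarrow> (nat set \<Rightarrow> colour) \<Rightarrow> nat" where
  "f n \<chi> = (LEAST k. \<exists>c F. finite F \<and> card F = k \<and> (\<forall>p\<in>F. mono_path n \<chi> c p)
                         \<and> {1..n} \<subseteq> (\<Union>p\<in>F. set p))"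

end

theory Submission
  imports Defs
begin

lemma mp_take:
  assumes "mono_path n \<chi> c p" "0 < m"
  shows "mono_path n \<chi> c (take m p)"
  using assms unfolding mono_path_def
  by (auto dest: in_set_takeD)

lemma mp_drop:
  assumes "mono_path n \<chi> c p" "i < length p"
  shows "mono_path n \<chi> c (drop i p)"
  using assms unfolding mono_path_def
  by (auto dest: in_set_dropD simp: add.commute)

lemma mp_single:
  assumes "y \<in> {1..n}"
  shows "mono_path n \<chi> c [y]"
  using assms unfolding mono_path_def by auto

lemma mp_append:
  assumes "mono_path n \<chi> c p" "mono_path n \<chi> c q" "set p \<inter> set q = {}"
    "\<chi> {last p, hd q} = c"
  shows "mono_path n \<chi> c (p @ q)"
  unfolding mono_path_def
proof (intro conjI allI impI)
  show "p @ q \<noteq> []" using assms(1) by (simp add: mono_path_def)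
  show "distinct (p @ q)" using assms by (simp add: mono_path_def)
  show "set (p @ q) \<subseteq> {1..n}" using assms by (simp add: mono_path_def)
  fix k assume k: "Suc k < length (p @ q)"
  have P1: "\<forall>i. Suc i < length p \<longrightarrow> \<chi> {p ! i, p ! Suc i} = c"
    and P2: "\<forall>i. Suc i < length q \<longrightarrow> \<chi> {q ! i, q ! Suc i} = c"
    and ne: "p \<noteq> []" "q \<noteq> []" using assms by (auto simp: mono_path_def)
  consider "Suc k < length p" | "Suc k = length p" | "length p \<le> k" by linarith
  then show "\<chi> {(p @ q) ! k, (p @ q) ! Suc k} = c"
  proof cases
    case 1 then show ?thesis using P1 by (simp add: nth_append)
  next
    case 2
    have "p ! k = last p" using 2 ne last_conv_nth by (metis diff_Suc_1)
    moreover have "q ! 0 = hd q" using ne by (simp add: hd_conv_nth)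
    ultimately show ?thesis using 2 assms(4) by (simp add: nth_append)
  next
    case 3
    then obtain d where d: "k = length p + d" using le_Suc_ex by blast
    have "Suc d < length q" using k d by simp
    then show ?thesis using P2 d by (simp add: nth_append)
  qed
qed

lemma pair_path_le:
  assumes P: "mono_path n \<chi> Blue P"
    and y: "y1 \<in> {1..n} - set P" "y2 \<in> {1..n} - set P" "y1 \<noteq> y2"
    and ij: "i \<le> j" "j < length P"
    and b: "\<chi> {y1, P ! i} = Blue" "\<chi> {y2, P ! j} = Blue"
  shows "\<exists>q. mono_path n \<chi> Blue q \<and> y1 \<in> set q \<and> y2 \<in> set q"
proof -
  define Q where "Q = drop i (take (Suc j) P)"
  have mQ: "mono_path n \<chi> Blue Q"
    unfolding Q_def using ij by (intro mp_drop mp_take P) auto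
  have hd: "hd Q = P ! i" unfolding Q_def using ij
    by (simp add: hd_drop_conv_nth)
  have lst: "last Q = P ! j" unfolding Q_def using ij
    by (simp add: last_drop take_Suc_conv_app_nth)
  have sQ: "set Q \<subseteq> set P" unfolding Q_def by (meson in_set_dropD in_set_takeD subsetI)
  have m1: "mono_path n \<chi> Blue ([y1] @ Q)"
    using y b mQ sQ hd by (intro mp_append mp_single) auto
  have l1: "last ([y1] @ Q) = P ! j" using lst mQ by (simp add: mono_path_def)
  have m2: "mono_path n \<chi> Blue (([y1] @ Q) @ [y2])"
    apply (rule mp_append[OF m1 mp_single])
    using y b sQ l1 by (auto simp: insert_commute)
  show ?thesis using m2 by (intro exI[of _ "([y1] @ Q) @ [y2]"]) auto
qed

lemma pair_path:
  assumes P: "mono_path n \<chi> Blue P"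
    and y: "y1 \<in> {1..n} - set P" "y2 \<in> {1..n} - set P" "y1 \<noteq> y2"
    and ij: "i < length P" "j < length P"
    and b: "\<chi> {y1, P ! i} = Blue" "\<chi> {y2, P ! j} = Blue"
  shows "\<exists>q. mono_path n \<chi> Blue q \<and> y1 \<in> set q \<and> y2 \<in> set q"
proof (cases "i \<le> j")
  case True then show ?thesis using pair_path_le[OF P y True ij(2)] ij b by blast
next
  case False
  then have "j \<le> i" by simp
  then show ?thesis using pair_path_le[OF P y(2) y(1) _ _ ij(1)] y(3) ij b by metis
qed

lemma cover:
  assumes P: "mono_path n \<chi> Blue P"
  shows "finite S \<Longrightarrow> S \<subseteq> {1..n} - set P \<Longrightarrow> \<forall>y\<in>S. \<exists>i<length P. \<chi> {y, P ! i} = Blue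
    \<Longrightarrow> \<exists>F. finite F \<and> 2 * card F \<le> card S + 1 \<and> (\<forall>p\<in>F. mono_path n \<chi> Blue p)
          \<and> S \<subseteq> (\<Union>p\<in>F. set p)"
proof (induction "card S" arbitrary: S rule: less_induct)
  case less
  consider "card S = 0" | "card S = 1" | "card S \<ge> 2" by linarith
  then show ?case
  proof cases
    case 1
    then have "S = {}" using less.prems by simp
    then show ?thesis by (intro exI[of _ "{}"]) auto
  next
    case 2
    then obtain y where "S = {y}" using card_1_singletonE by blast
    then show ?thesis using less.prems
      by (intro exI[of _ "{[y]}"]) (auto intro: mp_single)
  next
    case 3
    then obtain y1 where y1: "y1 \<in> S" by fastforce
    have "card (S - {y1}) \<ge> 1" using 3 y1 less.prems(1) by simp
    then have "S - {y1} \<noteq> {}" by (metis card.empty not_one_le_zero)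
    then obtain y2 where y2: "y2 \<in> S - {y1}" by blast
    define S' where "S' = S - {y1, y2}"
    have cS': "card S' = card S - 2" unfolding S'_def using y1 y2 less.prems(1)
      by (subst card_Diff_subset) auto
    obtain F' where F': "finite F'" "2 * card F' \<le> card S' + 1"
      "\<forall>p\<in>F'. mono_path n \<chi> Blue p" "S' \<subseteq> (\<Union>p\<in>F'. set p)"
      using less.hyps[of S'] less.prems cS' 3 unfolding S'_def by auto
    obtain i where i: "i < length P" "\<chi> {y1, P ! i} = Blue" using less.prems y1 by blast
    obtain j where j: "j < length P" "\<chi> {y2, P ! j} = Blue" using less.prems y2 by blast
    obtain q where q: "mono_path n \<chi> Blue q" "y1 \<in> set q" "y2 \<in> set q"
      using pair_path[OF P _ _ _ i(1) j(1) i(2) j(2)] less.prems y1 y2 by blast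
    have "card (insert q F') \<le> card F' + 1" using F'(1) by (simp add: card_insert_if)
    then show ?thesis using F' q cS' 3 unfolding S'_def
      by (intro exI[of _ "insert q F'"]) auto
  qed
qed

lemma ceil_half: "real_of_int \<lceil>real a / 2\<rceil> = real ((a + 1) div 2)"
proof (cases "even a")
  case True
  then obtain k where "a = 2 * k" by blast
  then show ?thesis by simp
next
  case False
  then obtain k where k: "a = 2 * k + 1" using oddE by blast
  have "\<lceil>real a / 2\<rceil> = int k + 1"
    unfolding k by (intro ceiling_unique) auto
  then show ?thesis using k by simp
qed

theorem lemma3p3:
  fixes n :: nat and \<chi> :: "nat set \<Rightarrow> colour" and P :: "nat list"
  assumes "mono_path n \<chi> Blue P"
  defines "Y \<equiv> {1..n} - set P"
  defines "Y0 \<equiv> {y \<in> Y. \<forall>v \<in> set P. \<chi> {y, v} \<noteq> Blue}"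
  shows "real (f n \<chi>) \<le> 1 + real_of_int \<lceil>real (card (Y - Y0)) / 2\<rceil> + real (card Y0)
       \<and> 1 + real_of_int \<lceil>real (card (Y - Y0)) / 2\<rceil> + real (card Y0)
           < 2 + real (card Y) / 2 + real (card Y0) / 2"
proof
  have fY: "finite Y" unfolding Y_def by simp
  have fY0: "finite Y0" using fY unfolding Y0_def by simp
  have Y0Y: "Y0 \<subseteq> Y" unfolding Y0_def by auto
  have cY: "card Y = card (Y - Y0) + card Y0"
    using card_Diff_subset[OF finite_subset[OF Y0Y fY] Y0Y] card_mono[OF fY Y0Y] by simp
  show "1 + real_of_int \<lceil>real (card (Y - Y0)) / 2\<rceil> + real (card Y0)
           < 2 + real (card Y) / 2 + real (card Y0) / 2"
  proof -
    define a where "a = card (Y - Y0)"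
    define b where "b = card Y0"
    have "(a + 1) div 2 * 2 \<le> a + 1" by simp
    then have "real ((a + 1) div 2 * 2) \<le> real (a + 1)" using of_nat_le_iff by blast
    then have h: "real ((a + 1) div 2) * 2 \<le> real a + 1" by simp
    have "1 + real ((a + 1) div 2) + real b < 2 + real (a + b) / 2 + real b / 2"
      using h by (simp add: field_simps)
    then show ?thesis unfolding ceil_half cY a_def b_def .
  qed
  have "\<forall>y\<in>Y - Y0. \<exists>i<length P. \<chi> {y, P ! i} = Blue"
    unfolding Y0_def by (auto simp: in_set_conv_nth)
  then obtain F where F: "finite F" "2 * card F \<le> card (Y - Y0) + 1"
    "\<forall>p\<in>F. mono_path n \<chi> Blue p" "Y - Y0 \<subseteq> (\<Union>p\<in>F. set p)"
  proof -
    have "finite (Y - Y0)" using fY by simp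
    moreover have "Y - Y0 \<subseteq> {1..n} - set P" unfolding Y_def by blast
    ultimately show ?thesis using cover[OF assms(1), of "Y - Y0"] that \<open>\<forall>y\<in>Y - Y0. _\<close> by blast
  qed
  define G where "G = insert P (F \<union> (\<lambda>y. [y]) ` Y0)"
  have fG: "finite G" unfolding G_def using F(1) fY0 by simp
  have cG: "card G \<le> 1 + card F + card Y0"
  proof -
    have "card G \<le> Suc (card (F \<union> (\<lambda>y. [y]) ` Y0))"
      unfolding G_def by (simp add: card_insert_le_m1 card_insert_if)
    also have "\<dots> \<le> Suc (card F + card ((\<lambda>y. [y]) ` Y0))" using card_Un_le by simp
    also have "\<dots> \<le> Suc (card F + card Y0)" using card_image_le fY0 by simp
    finally show ?thesis by simp
  qed
  have mG: "\<forall>p\<in>G. mono_path n \<chi> Blue p"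
  proof
    fix p assume "p \<in> G"
    then consider "p = P" | "p \<in> F" | y where "y \<in> Y0" "p = [y]" unfolding G_def by blast
    then show "mono_path n \<chi> Blue p"
    proof cases
      case 1 then show ?thesis using assms(1) by simp
    next
      case 2 then show ?thesis using F(3) by blast
    next
      case 3
      then have "y \<in> {1..n}" using Y0Y unfolding Y_def by blast
      then show ?thesis using 3 mp_single by simp
    qed
  qed
  have covG: "{1..n} \<subseteq> (\<Union>p\<in>G. set p)"
  proof
    fix x assume x: "x \<in> {1..n}"
    show "x \<in> (\<Union>p\<in>G. set p)"
    proof (cases "x \<in> set P")
      case True then show ?thesis unfolding G_def by auto
    next
      case False
      then have "x \<in> Y" using x unfolding Y_def by auto
      then show ?thesis using F(4) unfolding G_def by (cases "x \<in> Y0") auto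
    qed
  qed
  have ex: "\<exists>c F. finite F \<and> card F = card G \<and> (\<forall>p\<in>F. mono_path n \<chi> c p)
                         \<and> {1..n} \<subseteq> (\<Union>p\<in>F. set p)"
    apply (rule exI[of _ Blue], rule exI[of _ G]) using fG mG covG by simp
  have "f n \<chi> \<le> card G"
    unfolding f_def by (rule Least_le) (rule ex)
  also have "\<dots> \<le> 1 + (card (Y - Y0) + 1) div 2 + card Y0" using cG F(2) by linarith
  finally show "real (f n \<chi>) \<le> 1 + real_of_int \<lceil>real (card (Y - Y0)) / 2\<rceil> + real (card Y0)"
    unfolding ceil_half by linarith
qed

end
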